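(* Let $X$, $Y$ be disjoint sets of cardinality at least two, and let $M\le\mathrm{Sym}(X)$ and $N\le\mathrm{Sym}(Y)$ be nontrivial permutation groups. Then $M\boxtimes N$ is subdegree-finite if and only if $M$ is subdegree-finite and all orbits of $N$ are finite.
   Context: A permutation group is subdegree-finite if every orbit of every point stabiliser is finite. Let $T$ be the $(|X|,|Y|)$-biregular tree with natural bipartition $VT=V_X\sqcup V_Y$ (vertices in $V_X$ have valency $|X|$, in $V_Y$ valency $|Y|$). $A(v)$, $\overline{A}(v)$ are the sets of arcs with origin, resp. terminus, $v$. A legal colouring is a map $c:AT\to X\cup Y$ restricting to a bijection $A(v)\to X$ for $v\in V_X$, to a bijection $A(v)\to Y$ for $v\in V_Y$, and constant on each $\overline{A}(v)$. $U_c(M,N)$ is the group of $g\in\mathrm{Aut}(T)$ with $gV_X=V_X$ and $c|_{A(gv)}\circ g|_{A(v)}\circ(c|_{A(v)})^{-1}$ in $M$ for $v\in V_X$ and in $N$ for $v\in V_Y$. The box product $M\boxtimes N\le\mathrm{Sym}(V_Y)$ is the group induced on $V_Y$ by $U_c(M,N)$. *)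

theory Defs
  imports "HOL-Algebra.Bij" "HOL-Library.Equipollence"
begin

(* Graphs: vertex set V, adjacency relation E (only relevant on V). Arcs are ordered pairs (u,w) with E u w. *)

definition is_walk :: "('v \<Rightarrow> 'v \<Rightarrow> bool) \<Rightarrow> 'v list \<Rightarrow> bool" where
  "is_walk E xs \<longleftrightarrow> (\<forall>i. Suc i < length xs \<longrightarrow> E (xs ! i) (xs ! Suc i))"

definition non_backtracking :: "'v list \<Rightarrow> bool" where
  "non_backtracking xs \<longleftrightarrow> (\<forall>i. i + 2 < length xs \<longrightarrow> xs ! i \<noteq> xs ! (i + 2))"

(* A (possibly infinite, possibly infinitely-branching) tree: nonempty, symmetric adjacency on V,
   connected, and without nontrivial cycles (every non-backtracking walk with at least one edge
   has distinct endpoints; this also forces irreflexivity). *)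
definition is_tree :: "'v set \<Rightarrow> ('v \<Rightarrow> 'v \<Rightarrow> bool) \<Rightarrow> bool" where
  "is_tree V E \<longleftrightarrow> V \<noteq> {}
     \<and> (\<forall>u w. E u w \<longrightarrow> u \<in> V \<and> w \<in> V)
     \<and> (\<forall>u w. E u w \<longrightarrow> E w u)
     \<and> (\<forall>u\<in>V. \<forall>w\<in>V. E\<^sup>*\<^sup>* u w)
     \<and> (\<forall>xs. 2 \<le> length xs \<and> is_walk E xs \<and> non_backtracking xs \<longrightarrow> hd xs \<noteq> last xs)"

definition biregular_tree ::
  "'v set \<Rightarrow> ('v \<Rightarrow> 'v \<Rightarrow> bool) \<Rightarrow> 'v set \<Rightarrow> 'v set \<Rightarrow> 'c set \<Rightarrow> 'c set \<Rightarrow> bool" where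
  "biregular_tree V E VX VY X Y \<longleftrightarrow> is_tree V E
     \<and> VX \<union> VY = V \<and> VX \<inter> VY = {}
     \<and> (\<forall>u w. E u w \<longrightarrow> (u \<in> VX \<longleftrightarrow> w \<in> VY))
     \<and> (\<forall>v\<in>VX. {w. E v w} \<approx> X)
     \<and> (\<forall>v\<in>VY. {w. E v w} \<approx> Y)"

definition arcs_out :: "('v \<Rightarrow> 'v \<Rightarrow> bool) \<Rightarrow> 'v \<Rightarrow> ('v \<times> 'v) set" where
  "arcs_out E v = {(v, w) | w. E v w}"

definition arcs_in :: "('v \<Rightarrow> 'v \<Rightarrow> bool) \<Rightarrow> 'v \<Rightarrow> ('v \<times> 'v) set" where
  "arcs_in E v = {(w, v) | w. E w v}"

definition legal_colouring ::
  "('v \<Rightarrow> 'v \<Rightarrow> bool) \<Rightarrow> 'v set \<Rightarrow> 'v set \<Rightarrow> 'c set \<Rightarrow> 'c set \<Rightarrow> ('v \<times> 'v \<Rightarrow> 'c) \<Rightarrow> bool" where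
  "legal_colouring E VX VY X Y c \<longleftrightarrow>
     (\<forall>v\<in>VX. bij_betw c (arcs_out E v) X)
     \<and> (\<forall>v\<in>VY. bij_betw c (arcs_out E v) Y)
     \<and> (\<forall>v\<in>VX \<union> VY. \<forall>a\<in>arcs_in E v. \<forall>b\<in>arcs_in E v. c a = c b)"

definition tree_aut :: "'v set \<Rightarrow> ('v \<Rightarrow> 'v \<Rightarrow> bool) \<Rightarrow> ('v \<Rightarrow> 'v) set" where
  "tree_aut V E = {g \<in> Bij V. \<forall>u\<in>V. \<forall>w\<in>V. E u w \<longleftrightarrow> E (g u) (g w)}"

(* the local action  c|_{A(gv)} \<circ> g|_{A(v)} \<circ> (c|_{A(v)})^{-1}, as an extensional map on the colour set S *)
definition local_action ::
  "('v \<Rightarrow> 'v \<Rightarrow> bool) \<Rightarrow> ('v \<times> 'v \<Rightarrow> 'c) \<Rightarrow> ('v \<Rightarrow> 'v) \<Rightarrow> 'v \<Rightarrow> 'c set \<Rightarrow> 'c \<Rightarrow> 'c" where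
  "local_action E c g v S =
     (\<lambda>x\<in>S. c (case inv_into (arcs_out E v) c x of (a, b) \<Rightarrow> (g a, g b)))"

definition U_c ::
  "'v set \<Rightarrow> ('v \<Rightarrow> 'v \<Rightarrow> bool) \<Rightarrow> 'v set \<Rightarrow> 'v set \<Rightarrow> 'c set \<Rightarrow> 'c set \<Rightarrow> ('v \<times> 'v \<Rightarrow> 'c)
     \<Rightarrow> ('c \<Rightarrow> 'c) set \<Rightarrow> ('c \<Rightarrow> 'c) set \<Rightarrow> ('v \<Rightarrow> 'v) set" where
  "U_c V E VX VY X Y c M N =
     {g \<in> tree_aut V E. g ` VX = VX
        \<and> (\<forall>v\<in>VX. local_action E c g v X \<in> M)
        \<and> (\<forall>v\<in>VY. local_action E c g v Y \<in> N)}"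

definition box_product ::
  "'v set \<Rightarrow> ('v \<Rightarrow> 'v \<Rightarrow> bool) \<Rightarrow> 'v set \<Rightarrow> 'v set \<Rightarrow> 'c set \<Rightarrow> 'c set \<Rightarrow> ('v \<times> 'v \<Rightarrow> 'c)
     \<Rightarrow> ('c \<Rightarrow> 'c) set \<Rightarrow> ('c \<Rightarrow> 'c) set \<Rightarrow> ('v \<Rightarrow> 'v) set" where
  "box_product V E VX VY X Y c M N = (\<lambda>g. restrict g VY) ` U_c V E VX VY X Y c M N"

definition subdegree_finite :: "('a \<Rightarrow> 'a) set \<Rightarrow> 'a set \<Rightarrow> bool" where
  "subdegree_finite G \<Omega> \<longleftrightarrow>
     (\<forall>\<omega>\<in>\<Omega>. \<forall>\<alpha>\<in>\<Omega>. finite {g \<alpha> | g. g \<in> G \<and> g \<omega> = \<omega>})"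

definition all_orbits_finite :: "('a \<Rightarrow> 'a) set \<Rightarrow> 'a set \<Rightarrow> bool" where
  "all_orbits_finite G \<Omega> \<longleftrightarrow> (\<forall>\<alpha>\<in>\<Omega>. finite {g \<alpha> | g. g \<in> G})"

end

theory Submission
  imports Defs
begin


locale setting =
  fixes X Y :: "'c set" and V VX VY :: "'v set" and E :: "'v \<Rightarrow> 'v \<Rightarrow> bool"
    and c :: "'v \<times> 'v \<Rightarrow> 'c"
  assumes Xne: "X \<noteq> {}" and Yne: "Y \<noteq> {}"
    and bt: "biregular_tree V E VX VY X Y"
    and lc: "legal_colouring E VX VY X Y c"
begin

lemma tree: "is_tree V E" using bt by (simp add: biregular_tree_def)
lemma V_eq: "V = VX \<union> VY" using bt by (simp add: biregular_tree_def)
lemma disj: "VX \<inter> VY = {}" using bt by (simp add: biregular_tree_def)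
lemma E_V: "E u w \<Longrightarrow> u \<in> V \<and> w \<in> V" using tree by (simp add: is_tree_def)
lemma E_sym: "E u w \<Longrightarrow> E w u" using tree by (simp add: is_tree_def)
lemma E_cls: "E u w \<Longrightarrow> (u \<in> VX \<longleftrightarrow> w \<in> VY)" using bt by (simp add: biregular_tree_def)
lemma conn: "u \<in> V \<Longrightarrow> w \<in> V \<Longrightarrow> E\<^sup>*\<^sup>* u w" using tree by (simp add: is_tree_def)
lemma acyc: assumes "2 \<le> length xs" "is_walk E xs" "non_backtracking xs" shows "hd xs \<noteq> last xs"
proof -
  have "\<forall>xs. 2 \<le> length xs \<and> is_walk E xs \<and> non_backtracking xs \<longrightarrow> hd xs \<noteq> last xs"
    using tree unfolding is_tree_def by (elim conjE)
  then show ?thesis using assms by simp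
qed

lemma cls_nb: "E z w \<Longrightarrow> (w \<in> VX \<longleftrightarrow> z \<notin> VX)"
  using E_cls E_V V_eq disj by blast

definition SS :: "bool \<Rightarrow> 'c set" where "SS b = (if b then X else Y)"
definition S :: "'v \<Rightarrow> 'c set" where "S z = SS (z \<in> VX)"

lemma SS_ne: "SS b \<noteq> {}" using Xne Yne by (simp add: SS_def)

lemma lcX: "\<forall>v\<in>VX. bij_betw c (arcs_out E v) X" using lc unfolding legal_colouring_def by (elim conjE)
lemma lcY: "\<forall>v\<in>VY. bij_betw c (arcs_out E v) Y" using lc unfolding legal_colouring_def by (elim conjE)
lemma lcC: "\<forall>v\<in>VX \<union> VY. \<forall>a\<in>arcs_in E v. \<forall>b\<in>arcs_in E v. c a = c b"
  using lc unfolding legal_colouring_def by (elim conjE)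

lemma bijc: assumes "z \<in> V" shows "bij_betw c (arcs_out E z) (S z)"
proof (cases "z \<in> VX")
  case True then show ?thesis using lcX by (simp add: S_def SS_def)
next
  case False then have "z \<in> VY" using assms V_eq by blast
  then show ?thesis using lcY False by (simp add: S_def SS_def)
qed

definition lab :: "'v \<Rightarrow> 'c" where "lab z = c (SOME p. E p z, z)"

lemma lab_eq: assumes "E p z" shows "c (p, z) = lab z"
proof -
  have zV: "z \<in> VX \<union> VY" using E_V[OF assms] V_eq by simp
  have 1: "E (SOME p. E p z) z" using assms by (rule someI)
  have "(p, z) \<in> arcs_in E z" "((SOME p. E p z), z) \<in> arcs_in E z"
    using assms 1 by (auto simp: arcs_in_def)
  then show ?thesis using bspec[OF lcC zV] unfolding lab_def by (meson)
qed

lemma lab_in: assumes "E z w" shows "lab w \<in> S z"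
proof -
  have "(z, w) \<in> arcs_out E z" using assms by (simp add: arcs_out_def)
  then have "c (z, w) \<in> S z" using bij_betw_apply[OF bijc] E_V[OF assms] by blast
  then show ?thesis using lab_eq[OF assms] by simp
qed

lemma nb_unique: assumes "E z w" "E z w'" "lab w = lab w'" shows "w = w'"
proof -
  have "(z, w) \<in> arcs_out E z" "(z, w') \<in> arcs_out E z" using assms by (auto simp: arcs_out_def)
  moreover have "inj_on c (arcs_out E z)" using bijc[of z] E_V[OF assms(1)] unfolding bij_betw_def by blast
  moreover have "c (z, w) = c (z, w')" using assms lab_eq by simp
  ultimately show ?thesis by (auto dest: inj_onD)
qed

lemma nb_ex: assumes "z \<in> V" "l \<in> S z" shows "\<exists>w. E z w \<and> lab w = l"
proof -
  have "l \<in> c ` arcs_out E z" using bijc[OF assms(1)] assms(2) by (simp add: bij_betw_def)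
  then obtain w where "E z w" "c (z, w) = l" by (auto simp: arcs_out_def)
  then show ?thesis using lab_eq by auto
qed

definition nb :: "'v \<Rightarrow> 'c \<Rightarrow> 'v" where "nb z l = (SOME w. E z w \<and> lab w = l)"

lemma nb: assumes "z \<in> V" "l \<in> S z" shows "E z (nb z l)" "lab (nb z l) = l"
  using someI_ex[OF nb_ex[OF assms]] by (auto simp: nb_def)

lemma nb_lab: assumes "E z w" shows "nb z (lab w) = w"
proof -
  have zV: "z \<in> V" using E_V assms by blast
  have l: "lab w \<in> S z" using lab_in[OF assms] .
  show ?thesis using nb_unique[OF nb(1)[OF zV l] assms] nb(2)[OF zV l] by simp
qed

lemma has_nb: assumes "z \<in> V" shows "\<exists>w. E z w"
proof -
  obtain l where "l \<in> S z" using SS_ne by (auto simp: S_def)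
  then show ?thesis using nb_ex assms by blast
qed

lemma lab_cls: assumes "z \<in> V" shows "lab z \<in> SS (z \<notin> VX)"
proof -
  obtain p where "E z p" using has_nb assms by blast
  then have "E p z" by (rule E_sym)
  then show ?thesis using lab_in cls_nb by (simp add: S_def)
qed

lemma nb_cls: assumes "z \<in> V" "l \<in> S z" shows "nb z l \<in> V" "(nb z l \<in> VX) = (z \<notin> VX)"
  using nb[OF assms] E_V cls_nb by blast+

end


lemma is_walk_Cons: "is_walk E (a # xs) \<longleftrightarrow> (xs \<noteq> [] \<longrightarrow> E a (hd xs)) \<and> is_walk E xs"
proof
  assume h: "is_walk E (a # xs)"
  show "(xs \<noteq> [] \<longrightarrow> E a (hd xs)) \<and> is_walk E xs"
  proof
    show "xs \<noteq> [] \<longrightarrow> E a (hd xs)" using h[unfolded is_walk_def, rule_format, of 0]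
      by (auto simp: hd_conv_nth)
    show "is_walk E xs" unfolding is_walk_def
    proof (intro allI impI)
      fix i assume "Suc i < length xs"
      then show "E (xs ! i) (xs ! Suc i)" using h[unfolded is_walk_def, rule_format, of "Suc i"] by simp
    qed
  qed
next
  assume h: "(xs \<noteq> [] \<longrightarrow> E a (hd xs)) \<and> is_walk E xs"
  show "is_walk E (a # xs)" unfolding is_walk_def
  proof (intro allI impI)
    fix i assume i: "Suc i < length (a # xs)"
    show "E ((a # xs) ! i) ((a # xs) ! Suc i)"
    proof (cases i)
      case 0 then show ?thesis using h i by (auto simp: hd_conv_nth)
    next
      case (Suc j) then show ?thesis using h i unfolding is_walk_def by auto
    qed
  qed
qed

lemma nbt_Cons: "non_backtracking (a # xs) \<longleftrightarrow> (2 \<le> length xs \<longrightarrow> a \<noteq> xs ! 1) \<and> non_backtracking xs"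
proof
  assume h: "non_backtracking (a # xs)"
  show "(2 \<le> length xs \<longrightarrow> a \<noteq> xs ! 1) \<and> non_backtracking xs"
  proof
    show "2 \<le> length xs \<longrightarrow> a \<noteq> xs ! 1" using h[unfolded non_backtracking_def, rule_format, of 0]
      by auto
    show "non_backtracking xs" unfolding non_backtracking_def
    proof (intro allI impI)
      fix i assume "i + 2 < length xs"
      then show "xs ! i \<noteq> xs ! (i + 2)" using h[unfolded non_backtracking_def, rule_format, of "Suc i"] by simp
    qed
  qed
next
  assume h: "(2 \<le> length xs \<longrightarrow> a \<noteq> xs ! 1) \<and> non_backtracking xs"
  show "non_backtracking (a # xs)" unfolding non_backtracking_def
  proof (intro allI impI)
    fix i assume i: "i + 2 < length (a # xs)"
    show "(a # xs) ! i \<noteq> (a # xs) ! (i + 2)"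
    proof (cases i)
      case 0 then show ?thesis using h i by (auto simp: numeral_2_eq_2)
    next
      case (Suc j) then show ?thesis using h i unfolding non_backtracking_def by auto
    qed
  qed
qed

lemma nbt_rev: "non_backtracking xs \<Longrightarrow> non_backtracking (rev xs)"
  unfolding non_backtracking_def
proof (intro allI impI)
  fix i assume h: "\<forall>i. i + 2 < length xs \<longrightarrow> xs ! i \<noteq> xs ! (i + 2)" and i: "i + 2 < length (rev xs)"
  have "xs ! (length xs - 3 - i) \<noteq> xs ! (length xs - 3 - i + 2)" using h i by auto
  moreover have "length xs - 3 - i + 2 = length xs - Suc i" "length xs - 3 - i = length xs - Suc (i + 2)"
    using i by auto
  ultimately show "rev xs ! i \<noteq> rev xs ! (i + 2)" using i by (simp add: rev_nth)
qed

lemma nbt_append: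
  assumes "non_backtracking xs" "non_backtracking ys"
    and "2 \<le> length xs \<Longrightarrow> ys \<noteq> [] \<Longrightarrow> xs ! (length xs - 2) \<noteq> hd ys"
    and "xs \<noteq> [] \<Longrightarrow> 2 \<le> length ys \<Longrightarrow> last xs \<noteq> ys ! 1"
  shows "non_backtracking (xs @ ys)"
  unfolding non_backtracking_def
proof (intro allI impI)
  fix i assume i: "i + 2 < length (xs @ ys)"
  consider "i + 2 < length xs" | "length xs \<le> i" | "i + 2 = length xs" | "i + 1 = length xs" by linarith
  then show "(xs @ ys) ! i \<noteq> (xs @ ys) ! (i + 2)"
  proof cases
    case 1
    then have a: "(xs @ ys) ! i = xs ! i" "(xs @ ys) ! (i + 2) = xs ! (i + 2)"
      by (auto intro: nth_append_left)
    have "xs ! i \<noteq> xs ! (i + 2)" using assms(1) 1 unfolding non_backtracking_def by blast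
    then show ?thesis using a by simp
  next
    case 2
    then have "(i - length xs) + 2 < length ys" using i by simp
    then have b: "ys ! (i - length xs) \<noteq> ys ! (i - length xs + 2)"
      using assms(2) unfolding non_backtracking_def by blast
    have "i + 2 - length xs = i - length xs + 2" using 2 by simp
    moreover have "(xs @ ys) ! i = ys ! (i - length xs)" using 2 by (rule nth_append_right)
    moreover have "(xs @ ys) ! (i + 2) = ys ! (i + 2 - length xs)" using 2 by (intro nth_append_right) simp
    ultimately show ?thesis using b by simp
  next
    case 3
    then have ne: "ys \<noteq> []" using i by (cases ys) auto
    have l2: "2 \<le> length xs" using 3 by simp
    have ii: "i = length xs - 2" using 3 by simp
    have "i < length xs" using 3 by simp
    then have "(xs @ ys) ! i = xs ! i" by (rule nth_append_left)
    then have "(xs @ ys) ! i = xs ! (length xs - 2)" using ii by simp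
    moreover have "(xs @ ys) ! (i + 2) = ys ! 0" using 3 nth_append_length_plus[of xs ys 0] by simp
    moreover have "xs ! (length xs - 2) \<noteq> hd ys" using assms(3)[OF l2 ne] .
    ultimately show ?thesis using ne by (simp add: hd_conv_nth)
  next
    case 4
    then have l2: "2 \<le> length ys" using i by simp
    have ne: "xs \<noteq> []" using 4 by auto
    have ii: "i = length xs - 1" using 4 by simp
    have "i < length xs" using 4 by simp
    then have "(xs @ ys) ! i = xs ! i" by (rule nth_append_left)
    then have "(xs @ ys) ! i = last xs" using ii ne by (simp add: last_conv_nth)
    moreover have "i + 2 = length xs + 1" using 4 by simp
    then have "(xs @ ys) ! (i + 2) = ys ! 1" using nth_append_length_plus[of xs ys 1] by simp
    ultimately show ?thesis using assms(4)[OF ne l2] by simp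
  qed
qed


context setting
begin

lemma is_walk_rev: "is_walk E xs \<Longrightarrow> is_walk E (rev xs)"
  unfolding is_walk_def
proof (intro allI impI)
  fix i assume h: "\<forall>i. Suc i < length xs \<longrightarrow> E (xs ! i) (xs ! Suc i)" and i: "Suc i < length (rev xs)"
  have "E (xs ! (length xs - 2 - i)) (xs ! Suc (length xs - 2 - i))" using h i by auto
  moreover have "Suc (length xs - 2 - i) = length xs - Suc i" "length xs - 2 - i = length xs - Suc (Suc i)"
    using i by auto
  ultimately show "E (rev xs ! i) (rev xs ! Suc i)" using i E_sym by (simp add: rev_nth)
qed

lemma is_walk_append: "is_walk E xs \<Longrightarrow> is_walk E ys \<Longrightarrow> (xs \<noteq> [] \<Longrightarrow> ys \<noteq> [] \<Longrightarrow> E (last xs) (hd ys))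
  \<Longrightarrow> is_walk E (xs @ ys)"
proof (induction xs)
  case Nil then show ?case by simp
next
  case (Cons a xs)
  then show ?case by (cases xs) (auto simp: is_walk_Cons)
qed


fun walk :: "'v \<Rightarrow> 'c list \<Rightarrow> 'v" where
  "walk z [] = z"
| "walk z (l # r) = walk (nb z l) r"

fun path :: "'v \<Rightarrow> 'c list \<Rightarrow> 'v list" where
  "path z [] = [z]"
| "path z (l # r) = z # path (nb z l) r"

fun vw :: "bool \<Rightarrow> 'c option \<Rightarrow> 'c \<Rightarrow> 'c list \<Rightarrow> bool" where
  "vw isX b cur [] = True"
| "vw isX b cur (l # r) = (l \<in> SS isX \<and> Some l \<noteq> b \<and> vw (\<not> isX) (Some cur) l r)"

fun bk :: "'c option \<Rightarrow> 'c \<Rightarrow> 'c list \<Rightarrow> 'c option" where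
  "bk b cur [] = b"
| "bk b cur (l # r) = bk (Some cur) l r"

definition valid :: "'v \<Rightarrow> 'c option \<Rightarrow> 'c list \<Rightarrow> bool" where
  "valid z b ls = vw (z \<in> VX) b (lab z) ls"

lemma valid_Nil[simp]: "valid z b []" by (simp add: valid_def)

lemma valid_Cons: assumes "z \<in> V"
  shows "valid z b (l # r) \<longleftrightarrow> l \<in> S z \<and> Some l \<noteq> b \<and> valid (nb z l) (Some (lab z)) r"
proof (cases "l \<in> S z")
  case True
  then show ?thesis using nb_cls[OF assms True] nb(2)[OF assms True]
    by (simp add: valid_def S_def)
next
  case False then show ?thesis by (simp add: valid_def S_def)
qed

lemma walk_props:
  "z \<in> V \<Longrightarrow> valid z b ls \<Longrightarrow> walk z ls \<in> V \<and> (walk z ls \<in> VX \<longleftrightarrow> (z \<in> VX \<longleftrightarrow> even (length ls)))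
     \<and> (ls \<noteq> [] \<longrightarrow> lab (walk z ls) = last ls)"
proof (induction ls arbitrary: z b)
  case Nil then show ?case by simp
next
  case (Cons l r)
  have l: "l \<in> S z" and v: "valid (nb z l) (Some (lab z)) r" using Cons.prems valid_Cons by auto
  have nV: "nb z l \<in> V" and ncls: "(nb z l \<in> VX) = (z \<notin> VX)" using nb_cls[OF Cons.prems(1) l] by auto
  have IH: "walk (nb z l) r \<in> V \<and> (walk (nb z l) r \<in> VX \<longleftrightarrow> (nb z l \<in> VX \<longleftrightarrow> even (length r)))
     \<and> (r \<noteq> [] \<longrightarrow> lab (walk (nb z l) r) = last r)" using Cons.IH[OF nV v] .
  show ?case using IH ncls nb(2)[OF Cons.prems(1) l] by (cases r) auto
qed

lemma walk_snoc: "walk z (ls @ [l]) = nb (walk z ls) l"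
  by (induction ls arbitrary: z) auto

lemma vw_snoc: "vw isX b cur (ls @ [l]) \<longleftrightarrow> vw isX b cur ls \<and> l \<in> SS (isX = even (length ls)) \<and> Some l \<noteq> bk b cur ls"
proof (induction ls arbitrary: isX b cur)
  case Nil then show ?case by simp
next
  case (Cons a ls)
  have e: "((\<not> isX) = even (length ls)) = (isX = even (length (a # ls)))" by (cases isX) auto
  show ?case using Cons.IH[of "\<not> isX" "Some cur" a] e by auto
qed

lemma valid_snoc: assumes "z \<in> V" "valid z b ls"
  shows "valid z b (ls @ [l]) \<longleftrightarrow> l \<in> S (walk z ls) \<and> Some l \<noteq> bk b (lab z) ls"
proof -
  have "walk z ls \<in> VX \<longleftrightarrow> (z \<in> VX \<longleftrightarrow> even (length ls))" using walk_props[OF assms] by blast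
  then have "S (walk z ls) = SS ((z \<in> VX) = even (length ls))" by (simp add: S_def)
  then show ?thesis using assms(2) by (simp add: valid_def vw_snoc)
qed

lemma valid_prefix: "valid z b (ls @ rs) \<Longrightarrow> valid z b ls"
proof (induction rs rule: rev_induct)
  case Nil then show ?case by simp
next
  case (snoc x xs) then show ?case unfolding valid_def by (metis append_assoc vw_snoc)
qed

lemma bk_eq: "z \<in> V \<Longrightarrow> valid z b ls \<Longrightarrow> ls \<noteq> [] \<Longrightarrow> bk b (lab z) ls = Some (lab (walk z (butlast ls)))"
proof (induction ls arbitrary: z b)
  case Nil then show ?case by simp
next
  case (Cons l r)
  have l: "l \<in> S z" and v: "valid (nb z l) (Some (lab z)) r" using Cons.prems valid_Cons by auto
  have nV: "nb z l \<in> V" using nb_cls[OF Cons.prems(1) l] by auto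
  have nl: "lab (nb z l) = l" using nb(2)[OF Cons.prems(1) l] .
  show ?case
  proof (cases "r = []")
    case True then show ?thesis by simp
  next
    case False
    have "bk (Some (lab z)) (lab (nb z l)) r = Some (lab (walk (nb z l) (butlast r)))"
      using Cons.IH[OF nV v False] .
    then show ?thesis using False nl by simp
  qed
qed

lemma snoc_adj: assumes "z \<in> V" "valid z b (ls @ [l])"
  shows "E (walk z ls) (walk z (ls @ [l]))" "valid z b ls" "l \<in> S (walk z ls)"
proof -
  show v: "valid z b ls" using valid_prefix assms(2) by blast
  show l: "l \<in> S (walk z ls)" using valid_snoc[OF assms(1) v] assms(2) by blast
  have "walk z ls \<in> V" using walk_props[OF assms(1) v] by blast
  then show "E (walk z ls) (walk z (ls @ [l]))" using nb(1)[OF _ l] by (simp add: walk_snoc)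
qed

lemma parent_adj: assumes "z \<in> V" "valid z b ls" "ls \<noteq> []"
  shows "E (walk z (butlast ls)) (walk z ls)"
proof -
  have "ls = butlast ls @ [last ls]" using assms(3) by simp
  then show ?thesis using snoc_adj(1)[OF assms(1), of b "butlast ls" "last ls"] assms(2) by simp
qed

lemma word_ex: assumes "v \<in> V" "z \<in> V" shows "\<exists>ls. valid v None ls \<and> walk v ls = z"
proof -
  have "E\<^sup>*\<^sup>* v z" using conn assms by blast
  then show ?thesis
  proof (induction rule: rtranclp_induct)
    case base
    then show ?case by (intro exI[of _ "[]"]) simp
  next
    case (step y z)
    then obtain ls where ls: "valid v None ls" "walk v ls = y" by blast
    show ?case
    proof (cases "Some (lab z) = bk None (lab v) ls")
      case True
      then have ne: "ls \<noteq> []" by (cases ls) auto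
      have "Some (lab z) = Some (lab (walk v (butlast ls)))" using True bk_eq[OF assms(1) ls(1) ne] by simp
      then have lz: "lab z = lab (walk v (butlast ls))" by simp
      have "E (walk v (butlast ls)) y" using parent_adj[OF assms(1) ls(1) ne] ls(2) by simp
      then have "E y (walk v (butlast ls))" by (rule E_sym)
      then have "z = walk v (butlast ls)" using nb_unique[OF step(2)] lz by blast
      moreover have "valid v None (butlast ls)" using valid_prefix[of v None "butlast ls" "[last ls]"] ls(1) ne by simp
      ultimately show ?thesis by blast
    next
      case False
      have "lab z \<in> S y" using lab_in[OF step(2)] .
      then have "valid v None (ls @ [lab z])" using valid_snoc[OF assms(1) ls(1)] ls(2) False by auto
      moreover have "walk v (ls @ [lab z]) = z" using walk_snoc ls(2) nb_lab[OF step(2)] by simp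
      ultimately show ?thesis by blast
    qed
  qed
qed


lemma path_hd: "hd (path z ls) = z" by (cases ls) auto
lemma path_last: "last (path z ls) = walk z ls"
proof (induction ls arbitrary: z)
  case Nil then show ?case by simp
next
  case (Cons l r) then show ?case by (cases r) auto
qed
lemma path_len: "length (path z ls) = Suc (length ls)" by (induction ls arbitrary: z) auto
lemma path_ne: "path z ls \<noteq> []" by (cases ls) auto
lemma path_nth1: "path w (l # r) ! 1 = nb w l" by (cases r) auto

lemma path_walk: "z \<in> V \<Longrightarrow> valid z b ls \<Longrightarrow> is_walk E (path z ls)"
proof (induction ls arbitrary: z b)
  case Nil then show ?case by (simp add: is_walk_def)
next
  case (Cons l r)
  have l: "l \<in> S z" and v: "valid (nb z l) (Some (lab z)) r" using Cons.prems valid_Cons by auto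
  have nV: "nb z l \<in> V" using nb_cls[OF Cons.prems(1) l] by auto
  have "is_walk E (path (nb z l) r)" using Cons.IH[OF nV v] .
  moreover have "E z (hd (path (nb z l) r))" using nb(1)[OF Cons.prems(1) l] path_hd by simp
  ultimately show ?case by (simp add: is_walk_Cons)
qed

lemma path_nbt: "z \<in> V \<Longrightarrow> valid z b ls \<Longrightarrow> non_backtracking (path z ls)"
proof (induction ls arbitrary: z b)
  case Nil then show ?case by (simp add: non_backtracking_def)
next
  case (Cons l r)
  have l: "l \<in> S z" and v: "valid (nb z l) (Some (lab z)) r" using Cons.prems valid_Cons by auto
  have nV: "nb z l \<in> V" using nb_cls[OF Cons.prems(1) l] by auto
  have "non_backtracking (path (nb z l) r)" using Cons.IH[OF nV v] .
  moreover have "z \<noteq> path (nb z l) r ! 1" if h2: "2 \<le> length (path (nb z l) r)"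
  proof -
    obtain l' r' where r: "r = l' # r'" using h2 path_len by (cases r) auto
    have l': "l' \<in> S (nb z l)" "Some l' \<noteq> Some (lab z)" using v r valid_Cons[OF nV] by auto
    have "lab (nb (nb z l) l') = l'" using nb(2)[OF nV l'(1)] .
    then have "nb (nb z l) l' \<noteq> z" using l'(2) by auto
    then show ?thesis using r path_nth1 by simp
  qed
  ultimately show ?case by (simp add: nbt_Cons)
qed

lemma closed_walk: assumes "z \<in> V" "valid z b ls" "ls \<noteq> []" shows "walk z ls \<noteq> z"
proof -
  have "2 \<le> length (path z ls)" using path_len assms(3) by (cases ls) auto
  then have "hd (path z ls) \<noteq> last (path z ls)"
    using acyc path_walk[OF assms(1,2)] path_nbt[OF assms(1,2)] by blast
  then show ?thesis using path_hd path_last by simp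
qed

lemma word_uniq: "z \<in> V \<Longrightarrow> valid z b ls1 \<Longrightarrow> valid z b ls2 \<Longrightarrow> walk z ls1 = walk z ls2 \<Longrightarrow> ls1 = ls2"
proof (induction ls1 arbitrary: z b ls2)
  case Nil
  then show ?case using closed_walk[OF Nil(1) Nil(3)] by (cases ls2) auto
next
  case (Cons l1 r1)
  note IH = Cons.IH and prems = Cons.prems
  show ?case
  proof (cases ls2)
    case Nil
    then show ?thesis using closed_walk[OF prems(1) prems(2)] prems(4) by auto
  next
    case (Cons l2 r2)
    note Cons2 = this
    have l1: "l1 \<in> S z" and v1: "valid (nb z l1) (Some (lab z)) r1" using prems valid_Cons by auto
    have l2: "l2 \<in> S z" and v2: "valid (nb z l2) (Some (lab z)) r2" using prems Cons2 valid_Cons by auto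
    have n1V: "nb z l1 \<in> V" using nb_cls[OF prems(1) l1] by auto
    have n2V: "nb z l2 \<in> V" using nb_cls[OF prems(1) l2] by auto
    show ?thesis
    proof (cases "l1 = l2")
      case True
      then have "r1 = r2" using IH[OF n1V v1] v2 prems(4) Cons2 by simp
      then show ?thesis using True Cons2 by simp
    next
      case False
      define Q2 where "Q2 = path (nb z l2) r2"
      define P1 where "P1 = path z (l1 # r1)"
      define W where "W = rev Q2 @ P1"
      have wQ2: "is_walk E Q2" using path_walk[OF n2V v2] Q2_def by simp
      have wP1: "is_walk E P1" using path_walk[OF prems(1,2)] P1_def by simp
      have nQ2: "non_backtracking Q2" using path_nbt[OF n2V v2] Q2_def by simp
      have nP2: "non_backtracking (z # Q2)" using path_nbt[OF prems(1,3)] Q2_def Cons2 by simp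
      have nP1: "non_backtracking P1" using path_nbt[OF prems(1,2)] P1_def by simp
      have hQ2: "hd Q2 = nb z l2" "Q2 \<noteq> []" using path_hd path_ne Q2_def by auto
      have hP1: "hd P1 = z" "P1 ! 1 = nb z l1" "length P1 \<ge> 2" using P1_def path_nth1 path_len by auto
      have ne12: "nb z l2 \<noteq> nb z l1" using nb(2)[OF prems(1) l1] nb(2)[OF prems(1) l2] False by metis
      have walkW: "is_walk E W" unfolding W_def
      proof (rule is_walk_append)
        show "is_walk E (rev Q2)" using is_walk_rev[OF wQ2] .
        show "is_walk E P1" using wP1 .
        show "E (last (rev Q2)) (hd P1)" using hQ2 hP1 nb(1)[OF prems(1) l2] E_sym
          by (simp add: last_rev)
      qed
      have nbW: "non_backtracking W" unfolding W_def
      proof (rule nbt_append)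
        show "non_backtracking (rev Q2)" using nbt_rev[OF nQ2] .
        show "non_backtracking P1" using nP1 .
        show "rev Q2 ! (length (rev Q2) - 2) \<noteq> hd P1" if "2 \<le> length (rev Q2)"
        proof -
          have "rev Q2 ! (length (rev Q2) - 2) = Q2 ! 1" using that by (simp add: rev_nth numeral_2_eq_2)
          moreover have "z \<noteq> Q2 ! 1" using nP2 that by (simp add: nbt_Cons)
          ultimately show ?thesis using hP1 by simp
        qed
        show "last (rev Q2) \<noteq> P1 ! 1" using hQ2 hP1 ne12 by (simp add: last_rev)
      qed
      have lenW: "2 \<le> length W" using hP1 W_def by simp
      have "hd W = walk z ls2" using hQ2 path_last Q2_def Cons2 by (simp add: W_def hd_rev)
      moreover have "last W = walk z (l1 # r1)"
      proof -
        have "last W = last P1" unfolding W_def using hP1(3) by (cases P1) auto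
        then show ?thesis using path_last[of z "l1 # r1"] P1_def by simp
      qed
      ultimately have "hd W = last W" using prems(4) by simp
      then show ?thesis using acyc[OF lenW walkW nbW] by simp
    qed
  qed
qed

end


fun Gp :: "('c \<Rightarrow> 'c) \<Rightarrow> bool \<Rightarrow> 'c list \<Rightarrow> 'c list" where
  "Gp f p [] = []"
| "Gp f p (l # r) = (if p then f l else l) # Gp f (\<not> p) r"

lemma Gp_len: "length (Gp f p ls) = length ls"
  by (induction ls arbitrary: p) auto

lemma Gp_snoc: "Gp f p (ls @ [l]) = Gp f p ls @ [if p = even (length ls) then f l else l]"
proof (induction ls arbitrary: p)
  case Nil then show ?case by simp
next
  case (Cons a ls)
  have e: "((\<not> p) = even (length ls)) = (p = even (length (a # ls)))" by (cases p) auto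
  show ?case using Cons.IH[of "\<not> p"] e by simp
qed

lemma Gp_butlast: "butlast (Gp f p ls) = Gp f p (butlast ls)"
proof (cases ls rule: rev_cases)
  case Nil then show ?thesis by simp
next
  case (snoc ys y) then show ?thesis by (simp add: Gp_snoc)
qed

lemma Gp_Nil_iff: "Gp f p ls = [] \<longleftrightarrow> ls = []"
  by (cases ls) auto

context setting
begin

definition fp :: "('c \<Rightarrow> 'c) \<Rightarrow> bool \<Rightarrow> 'c \<Rightarrow> 'c" where "fp f p x = (if p then f x else x)"

lemma vw_Gp:
  "vw isX b cur ls \<Longrightarrow> bij_betw f (SS vX) (SS vX) \<Longrightarrow> (p \<longleftrightarrow> isX = vX) \<Longrightarrow> set_option b \<subseteq> SS isX
    \<Longrightarrow> cur \<in> SS (\<not> isX) \<Longrightarrow> vw isX (map_option (fp f p) b) (fp f (\<not> p) cur) (Gp f p ls)"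
proof (induction ls arbitrary: isX b cur p)
  case Nil then show ?case by simp
next
  case (Cons l r)
  have l: "l \<in> SS isX" "Some l \<noteq> b" and vr: "vw (\<not> isX) (Some cur) l r" using Cons.prems(1) by auto
  have IH: "vw (\<not> isX) (map_option (fp f (\<not> p)) (Some cur)) (fp f (\<not> \<not> p) l) (Gp f (\<not> p) r)"
    using Cons.IH[OF vr Cons.prems(2), of "\<not> p"] Cons.prems(3,5) l(1) by auto
  have a: "fp f p l \<in> SS isX"
  proof (cases p)
    case True
    then have "isX = vX" using Cons.prems(3) by simp
    then show ?thesis using True l(1) bij_betw_apply[OF Cons.prems(2)] by (simp add: fp_def)
  next
    case False then show ?thesis using l(1) by (simp add: fp_def)
  qed
  have b: "Some (fp f p l) \<noteq> map_option (fp f p) b"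
  proof (cases b)
    case None then show ?thesis by simp
  next
    case (Some b')
    then have b': "b' \<in> SS isX" "l \<noteq> b'" using Cons.prems(4) l(2) by auto
    show ?thesis
    proof (cases p)
      case True
      then have "isX = vX" using Cons.prems(3) by simp
      have inj: "inj_on f (SS vX)" using Cons.prems(2) by (rule bij_betw_imp_inj_on)
      have "f l \<noteq> f b'"
      proof
        assume "f l = f b'"
        then have "l = b'" using inj_onD[OF inj] b'(1) l(1) \<open>isX = vX\<close> by simp
        then show False using b'(2) by simp
      qed
      then show ?thesis using True Some by (simp add: fp_def)
    next
      case False then show ?thesis using Some b' by (simp add: fp_def)
    qed
  qed
  have eq1: "Gp f p (l # r) = fp f p l # Gp f (\<not> p) r" by (simp add: fp_def)
  have eq2: "fp f (\<not> \<not> p) l = fp f p l" by simp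
  show ?case unfolding eq1 vw.simps(2) using IH a b eq2 by simp
qed

lemma Gp_inv:
  "vw isX b cur ls \<Longrightarrow> (p \<longleftrightarrow> isX = vX) \<Longrightarrow> (\<forall>x\<in>SS vX. g (f x) = x) \<Longrightarrow> Gp g p (Gp f p ls) = ls"
proof (induction ls arbitrary: isX b cur p)
  case Nil then show ?case by simp
next
  case (Cons l r)
  have l: "l \<in> SS isX" and vr: "vw (\<not> isX) (Some cur) l r" using Cons.prems(1) by auto
  have "Gp g (\<not> p) (Gp f (\<not> p) r) = r" using Cons.IH[OF vr, of "\<not> p"] Cons.prems(2,3) by auto
  moreover have "(if p then g (f l) else l) = l" using Cons.prems(2,3) l by auto
  ultimately show ?case by (cases p) simp_all
qed

lemma valid_Gp: assumes "v \<in> V" "bij_betw f (S v) (S v)" "valid v None ls"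
  shows "valid v None (Gp f True ls)"
proof -
  have "lab v \<in> SS (\<not> (v \<in> VX))" using lab_cls[OF assms(1)] by simp
  then have "vw (v \<in> VX) (map_option (fp f True) None) (fp f (\<not> True) (lab v)) (Gp f True ls)"
    using vw_Gp[of "v \<in> VX" None "lab v" ls f "v \<in> VX" True] assms(2,3) by (simp add: valid_def S_def)
  then show ?thesis by (simp add: valid_def fp_def)
qed

lemma Gp_inv_root: assumes "valid v None ls" "\<forall>x\<in>S v. g (f x) = x"
  shows "Gp g True (Gp f True ls) = ls"
  using Gp_inv[of "v \<in> VX" None "lab v" ls True "v \<in> VX" g f] assms by (simp add: valid_def S_def)

definition word :: "'v \<Rightarrow> 'v \<Rightarrow> 'c list" where
  "word v z = (THE ls. valid v None ls \<and> walk v ls = z)"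

lemma word: assumes "v \<in> V" "z \<in> V" shows "valid v None (word v z)" "walk v (word v z) = z"
proof -
  have "\<exists>!ls. valid v None ls \<and> walk v ls = z"
    using word_ex[OF assms] word_uniq[OF assms(1)] by blast
  then have "valid v None (word v z) \<and> walk v (word v z) = z" unfolding word_def by (rule theI')
  then show "valid v None (word v z)" "walk v (word v z) = z" by auto
qed

lemma word_walk: assumes "v \<in> V" "valid v None ls" shows "word v (walk v ls) = ls"
proof -
  have wV: "walk v ls \<in> V" using walk_props[OF assms] by blast
  show ?thesis using word_uniq[OF assms(1) word(1)[OF assms(1) wV] assms(2)] word(2)[OF assms(1) wV] by simp
qed

lemma nbr_cases: assumes "v \<in> V" "valid v None ls" "E (walk v ls) z'"
  shows "(ls \<noteq> [] \<and> z' = walk v (butlast ls)) \<or> (valid v None (ls @ [lab z']) \<and> z' = walk v (ls @ [lab z']))"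
proof (cases "Some (lab z') = bk None (lab v) ls")
  case True
  then have ne: "ls \<noteq> []" by (cases ls) auto
  have "Some (lab z') = Some (lab (walk v (butlast ls)))" using True bk_eq[OF assms(1,2) ne] by simp
  then have lz: "lab z' = lab (walk v (butlast ls))" by simp
  have "E (walk v (butlast ls)) (walk v ls)" using parent_adj[OF assms(1,2) ne] by simp
  then have "E (walk v ls) (walk v (butlast ls))" by (rule E_sym)
  then have "z' = walk v (butlast ls)" using nb_unique[OF assms(3)] lz by blast
  then show ?thesis using ne by blast
next
  case False
  have "lab z' \<in> S (walk v ls)" using lab_in[OF assms(3)] .
  then have "valid v None (ls @ [lab z'])" using valid_snoc[OF assms(1,2)] False by auto
  moreover have "walk v (ls @ [lab z']) = z'" using walk_snoc nb_lab[OF assms(3)] by simp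
  ultimately show ?thesis by auto
qed

definition rot :: "'v \<Rightarrow> ('c \<Rightarrow> 'c) \<Rightarrow> 'v \<Rightarrow> 'v" where
  "rot v f = (\<lambda>z\<in>V. walk v (Gp f True (word v z)))"


lemma rot_walk: assumes "v \<in> V" "bij_betw f (S v) (S v)" "valid v None ls"
  shows "rot v f (walk v ls) = walk v (Gp f True ls)"
proof -
  have "walk v ls \<in> V" using walk_props[OF assms(1,3)] by blast
  then show ?thesis using word_walk[OF assms(1,3)] by (simp add: rot_def)
qed

lemma rot_props: assumes "v \<in> V" "bij_betw f (S v) (S v)" "z \<in> V"
  shows "rot v f z \<in> V" "word v (rot v f z) = Gp f True (word v z)" "(rot v f z \<in> VX) = (z \<in> VX)"
proof -
  define ls where "ls = word v z"
  have v: "valid v None ls" "walk v ls = z" using word[OF assms(1,3)] ls_def by auto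
  have v': "valid v None (Gp f True ls)" using valid_Gp[OF assms(1,2) v(1)] .
  have r: "rot v f z = walk v (Gp f True ls)" using assms(3) ls_def by (simp add: rot_def)
  show "rot v f z \<in> V" using r walk_props[OF assms(1) v'] by simp
  show "word v (rot v f z) = Gp f True (word v z)" using r word_walk[OF assms(1) v'] ls_def by simp
  have "(walk v (Gp f True ls) \<in> VX) = (v \<in> VX \<longleftrightarrow> even (length ls))"
    using walk_props[OF assms(1) v'] by (simp add: Gp_len)
  moreover have "(walk v ls \<in> VX) = (v \<in> VX \<longleftrightarrow> even (length ls))"
    using walk_props[OF assms(1) v(1)] by blast
  ultimately show "(rot v f z \<in> VX) = (z \<in> VX)" using r v(2) by simp
qed

lemma rot_inv: assumes "v \<in> V" "bij_betw f (S v) (S v)" "bij_betw g (S v) (S v)"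
    "\<forall>x\<in>S v. g (f x) = x" "z \<in> V"
  shows "rot v g (rot v f z) = z"
proof -
  define ls where "ls = word v z"
  have v: "valid v None ls" "walk v ls = z" using word[OF assms(1,5)] ls_def by auto
  have v': "valid v None (Gp f True ls)" using valid_Gp[OF assms(1,2) v(1)] .
  have "rot v f z = walk v (Gp f True ls)" using assms(5) ls_def by (simp add: rot_def)
  then have "rot v g (rot v f z) = walk v (Gp g True (Gp f True ls))"
    using rot_walk[OF assms(1,3) v'] by simp
  then show ?thesis using Gp_inv_root[of v ls g f] v(1) assms(4) v(2) by simp
qed

lemma rot_adj: assumes "v \<in> V" "bij_betw f (S v) (S v)" "E z z'"
  shows "E (rot v f z) (rot v f z')"
proof -
  have zV: "z \<in> V" and z'V: "z' \<in> V" using E_V assms(3) by auto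
  define ls where "ls = word v z"
  have v: "valid v None ls" "walk v ls = z" using word[OF assms(1) zV] ls_def by auto
  have v': "valid v None (Gp f True ls)" using valid_Gp[OF assms(1,2) v(1)] .
  have rz: "rot v f z = walk v (Gp f True ls)" using rot_walk[OF assms(1,2) v(1)] v(2) by simp
  have "E (walk v ls) z'" using assms(3) v(2) by simp
  from nbr_cases[OF assms(1) v(1) this] show ?thesis
  proof
    assume h: "ls \<noteq> [] \<and> z' = walk v (butlast ls)"
    have vb: "valid v None (butlast ls)" using valid_prefix[of v None "butlast ls" "[last ls]"] v(1) h by simp
    have "rot v f z' = walk v (Gp f True (butlast ls))" using rot_walk[OF assms(1,2) vb] h by simp
    also have "\<dots> = walk v (butlast (Gp f True ls))" by (simp add: Gp_butlast)
    finally have rz': "rot v f z' = walk v (butlast (Gp f True ls))" .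
    have "Gp f True ls \<noteq> []" using h Gp_Nil_iff by metis
    then have "E (walk v (butlast (Gp f True ls))) (walk v (Gp f True ls))" using parent_adj[OF assms(1) v'] by blast
    then show ?thesis using rz rz' E_sym by simp
  next
    assume h: "valid v None (ls @ [lab z']) \<and> z' = walk v (ls @ [lab z'])"
    have vs: "valid v None (Gp f True (ls @ [lab z']))" using valid_Gp[OF assms(1,2) conjunct1[OF h]] .
    have h1: "valid v None (ls @ [lab z'])" using h by (rule conjunct1)
    have h2: "z' = walk v (ls @ [lab z'])" using h by (rule conjunct2)
    have "rot v f z' = rot v f (walk v (ls @ [lab z']))" using h2 by (rule arg_cong)
    also have "\<dots> = walk v (Gp f True (ls @ [lab z']))" using rot_walk[OF assms(1,2) h1] .
    finally have "rot v f z' = walk v (Gp f True (ls @ [lab z']))" .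
    then show ?thesis using snoc_adj(1)[OF assms(1)] vs rz by (simp add: Gp_snoc)
  qed
qed

lemma rot_lab: assumes "v \<in> V" "bij_betw f (S v) (S v)" "E z w"
  shows "lab (rot v f w) = (if even (length (word v z)) then f (lab w) else lab w)"
proof -
  have zV: "z \<in> V" and wV: "w \<in> V" using E_V assms(3) by auto
  define ls where "ls = word v z"
  have v: "valid v None ls" "walk v ls = z" using word[OF assms(1) zV] ls_def by auto
  have "E (walk v ls) w" using assms(3) v(2) by simp
  from nbr_cases[OF assms(1) v(1) this] show ?thesis
  proof
    assume h: "ls \<noteq> [] \<and> w = walk v (butlast ls)"
    have vb: "valid v None (butlast ls)" using valid_prefix[of v None "butlast ls" "[last ls]"] v(1) h by simp
    have rw: "rot v f w = walk v (Gp f True (butlast ls))" using rot_walk[OF assms(1,2) vb] h by simp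
    show ?thesis
    proof (cases "butlast ls" rule: rev_cases)
      case Nil
      then have "length ls = 1" using h by (cases ls) (auto split: if_splits)
      then show ?thesis using rw h Nil ls_def by simp
    next
      case (snoc ys y)
      have vs: "valid v None (Gp f True (butlast ls))" using valid_Gp[OF assms(1,2) vb] .
      have ne: "Gp f True (butlast ls) \<noteq> []" using snoc by (simp add: Gp_Nil_iff)
      have "lab (rot v f w) = last (Gp f True (butlast ls))" using rw walk_props[OF assms(1) vs] ne by simp
      also have "\<dots> = (if even (length ys) then f y else y)" using snoc by (simp add: Gp_snoc)
      finally have a: "lab (rot v f w) = (if even (length ys) then f y else y)" .
      have "lab w = y" using h walk_props[OF assms(1) vb] snoc by simp
      moreover have "length ls = length ys + 2"
      proof -
        have "length (butlast ls) = length ys + 1" using snoc by simp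
        moreover have "length (butlast ls) = length ls - 1" by simp
        moreover have "length ls \<ge> 1" using h by (cases ls) auto
        ultimately show ?thesis by linarith
      qed
      ultimately show ?thesis using a ls_def by simp
    qed
  next
    assume h: "valid v None (ls @ [lab w]) \<and> w = walk v (ls @ [lab w])"
    have vs: "valid v None (Gp f True (ls @ [lab w]))" using valid_Gp[OF assms(1,2) conjunct1[OF h]] .
    have h1: "valid v None (ls @ [lab w])" using h by (rule conjunct1)
    have h2: "w = walk v (ls @ [lab w])" using h by (rule conjunct2)
    have "rot v f w = rot v f (walk v (ls @ [lab w]))" using h2 by (rule arg_cong)
    also have "\<dots> = walk v (Gp f True (ls @ [lab w]))" using rot_walk[OF assms(1,2) h1] .
    finally have "rot v f w = walk v (Gp f True (ls @ [lab w]))" .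
    then have "lab (rot v f w) = last (Gp f True (ls @ [lab w]))" using walk_props[OF assms(1) vs] by (simp add: Gp_Nil_iff)
    then show ?thesis using ls_def by (simp add: Gp_snoc)
  qed
qed

end


context setting
begin

lemma la_val: assumes "z \<in> V" "x \<in> S z" "E (g z) (g (nb z x))"
  shows "local_action E c g z (S z) x = lab (g (nb z x))"
proof -
  have e: "E z (nb z x)" "lab (nb z x) = x" using nb[OF assms(1,2)] by auto
  have mem: "(z, nb z x) \<in> arcs_out E z" using e(1) by (simp add: arcs_out_def)
  have inj: "inj_on c (arcs_out E z)" using bijc[OF assms(1)] by (rule bij_betw_imp_inj_on)
  have "c (z, nb z x) = x" using lab_eq[OF e(1)] e(2) by simp
  then have "inv_into (arcs_out E z) c x = (z, nb z x)" using inv_into_f_eq[OF inj mem] by simp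
  then have "local_action E c g z (S z) x = c (g z, g (nb z x))"
    using assms(2) by (simp add: local_action_def)
  then show ?thesis using lab_eq[OF assms(3)] by simp
qed

lemma la_out: "x \<notin> S z \<Longrightarrow> local_action E c g z (S z) x = undefined"
  by (simp add: local_action_def)

lemma rot_la: assumes "v \<in> V" "bij_betw f (S v) (S v)" "f \<in> extensional (S v)" "z \<in> V"
  shows "local_action E c (rot v f) z (S z) = (if even (length (word v z)) then f else (\<lambda>x\<in>S z. x))"
    and "even (length (word v z)) \<Longrightarrow> S z = S v"
proof -
  have wz: "valid v None (word v z)" "walk v (word v z) = z" using word[OF assms(1,4)] by auto
  have cls: "(z \<in> VX) = (v \<in> VX \<longleftrightarrow> even (length (word v z)))" using walk_props[OF assms(1) wz(1)] wz(2) by simp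
  show Sz: "even (length (word v z)) \<Longrightarrow> S z = S v" using cls by (simp add: S_def)
  show "local_action E c (rot v f) z (S z) = (if even (length (word v z)) then f else (\<lambda>x\<in>S z. x))"
  proof
    fix x
    show "local_action E c (rot v f) z (S z) x = (if even (length (word v z)) then f else (\<lambda>x\<in>S z. x)) x"
    proof (cases "x \<in> S z")
      case True
      have e: "E z (nb z x)" "lab (nb z x) = x" using nb[OF assms(4) True] by auto
      have "local_action E c (rot v f) z (S z) x = lab (rot v f (nb z x))"
        using la_val[OF assms(4) True rot_adj[OF assms(1,2) e(1)]] .
      also have "\<dots> = (if even (length (word v z)) then f x else x)" using rot_lab[OF assms(1,2) e(1)] e(2) by simp
      finally show ?thesis using True by simp
    next
      case False
      have "f x = undefined" if "even (length (word v z))"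
        using assms(3) False Sz[OF that] by (simp add: extensional_def)
      then show ?thesis using False la_out by simp
    qed
  qed
qed

lemma rot_U:
  assumes v: "v \<in> V" and fB: "f \<in> Bij (S v)" and idM: "(\<lambda>x\<in>X. x) \<in> M" and idN: "(\<lambda>x\<in>Y. x) \<in> N"
    and fM: "v \<in> VX \<Longrightarrow> f \<in> M" and fN: "v \<notin> VX \<Longrightarrow> f \<in> N"
  shows "rot v f \<in> U_c V E VX VY X Y c M N"
proof -
  have bf: "bij_betw f (S v) (S v)" and ef: "f \<in> extensional (S v)" using fB by (auto simp: Bij_def)
  define g where "g = inv_into (S v) f"
  have bg: "bij_betw g (S v) (S v)" unfolding g_def using bf by (rule bij_betw_inv_into)
  have gf: "\<forall>x\<in>S v. g (f x) = x" unfolding g_def using bf by (simp add: bij_betw_def)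
  have fg: "\<forall>x\<in>S v. f (g x) = x" unfolding g_def using bf by (simp add: bij_betw_def f_inv_into_f)
  have R1: "\<forall>z\<in>V. rot v f z \<in> V" "\<forall>z\<in>V. rot v g z \<in> V" using rot_props(1)[OF v bf] rot_props(1)[OF v bg] by auto
  have R2: "\<forall>z\<in>V. rot v g (rot v f z) = z" "\<forall>z\<in>V. rot v f (rot v g z) = z"
    using rot_inv[OF v bf bg gf] rot_inv[OF v bg bf fg] by auto
  have bij: "bij_betw (rot v f) V V"
    using R1 R2 by (intro bij_betw_byWitness[where f' = "rot v g"]) auto
  have ext: "rot v f \<in> extensional V" by (simp add: rot_def)
  have adj: "\<forall>u\<in>V. \<forall>w\<in>V. E u w \<longleftrightarrow> E (rot v f u) (rot v f w)"
  proof (intro ballI iffI)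
    fix u w assume "u \<in> V" "w \<in> V" "E u w"
    then show "E (rot v f u) (rot v f w)" using rot_adj[OF v bf] by blast
  next
    fix u w assume uw: "u \<in> V" "w \<in> V" "E (rot v f u) (rot v f w)"
    then have "E (rot v g (rot v f u)) (rot v g (rot v f w))" using rot_adj[OF v bg] by blast
    then show "E u w" using R2 uw by simp
  qed
  have aut: "rot v f \<in> tree_aut V E" using bij ext adj by (simp add: tree_aut_def Bij_def)
  have img: "rot v f ` VX = VX"
  proof
    show "rot v f ` VX \<subseteq> VX" using rot_props(3)[OF v bf] V_eq by auto
    show "VX \<subseteq> rot v f ` VX"
    proof
      fix z assume z: "z \<in> VX"
      then have zV: "z \<in> V" using V_eq by auto
      have "rot v g z \<in> VX" using rot_props(3)[OF v bg zV] z by simp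
      moreover have "z = rot v f (rot v g z)" using R2 zV by simp
      ultimately show "z \<in> rot v f ` VX" by blast
    qed
  qed
  have laX: "\<forall>z\<in>VX. local_action E c (rot v f) z X \<in> M"
  proof
    fix z assume z: "z \<in> VX"
    then have zV: "z \<in> V" using V_eq by auto
    have SX: "S z = X" using z by (simp add: S_def SS_def)
    have wz: "valid v None (word v z)" "walk v (word v z) = z" using word[OF v zV] by auto
    have cls: "(z \<in> VX) = (v \<in> VX \<longleftrightarrow> even (length (word v z)))" using walk_props[OF v wz(1)] wz(2) by simp
    show "local_action E c (rot v f) z X \<in> M"
      using rot_la(1)[OF v bf ef zV] SX cls z fM idM by auto
  qed
  have laY: "\<forall>z\<in>VY. local_action E c (rot v f) z Y \<in> N"
  proof
    fix z assume z: "z \<in> VY"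
    then have zV: "z \<in> V" and zX: "z \<notin> VX" using V_eq disj by auto
    have SY: "S z = Y" using zX by (simp add: S_def SS_def)
    have wz: "valid v None (word v z)" "walk v (word v z) = z" using word[OF v zV] by auto
    have cls: "(z \<in> VX) = (v \<in> VX \<longleftrightarrow> even (length (word v z)))" using walk_props[OF v wz(1)] wz(2) by simp
    show "local_action E c (rot v f) z Y \<in> N"
      using rot_la(1)[OF v bf ef zV] SY cls zX fN idN by auto
  qed
  show ?thesis using aut img laX laY by (simp add: U_c_def)
qed

end


lemma coset_fin:
  assumes sg: "subgroup M (BijGroup X)" and sf: "subdegree_finite M X" and a: "a \<in> X" and l: "l \<in> X"
  shows "finite {\<sigma> l | \<sigma>. \<sigma> \<in> M \<and> \<sigma> a = b}"
proof (cases "\<exists>\<sigma>0\<in>M. \<sigma>0 a = b")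
  case False
  have e: "{\<sigma> l | \<sigma>. \<sigma> \<in> M \<and> \<sigma> a = b} = {}" using False by blast
  show ?thesis unfolding e by simp
next
  case True
  then obtain s0 where s0: "s0 \<in> M" "s0 a = b" by blast
  define G where "G = BijGroup X"
  have grp: "group G" unfolding G_def by (rule group_BijGroup)
  have MB: "M \<subseteq> Bij X" using subgroup.subset[OF sg] by (simp add: BijGroup_def)
  have s0B: "s0 \<in> Bij X" using MB s0(1) by blast
  have inj0: "inj_on s0 X" using s0B by (simp add: Bij_def bij_betw_def)
  have fin: "finite {\<rho> l | \<rho>. \<rho> \<in> M \<and> \<rho> a = a}" using sf a l by (simp add: subdegree_finite_def)
  have "{\<sigma> l | \<sigma>. \<sigma> \<in> M \<and> \<sigma> a = b} \<subseteq> s0 ` {\<rho> l | \<rho>. \<rho> \<in> M \<and> \<rho> a = a}"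
  proof
    fix y assume "y \<in> {\<sigma> l | \<sigma>. \<sigma> \<in> M \<and> \<sigma> a = b}"
    then obtain s where s: "s \<in> M" "s a = b" "y = s l" by blast
    define r where "r = inv\<^bsub>G\<^esub> s0 \<otimes>\<^bsub>G\<^esub> s"
    have rM: "r \<in> M" unfolding r_def G_def using sg s0(1) s(1)
      by (simp add: subgroup.m_closed subgroup.m_inv_closed)
    have rB: "r \<in> Bij X" using MB rM by blast
    have sB: "s \<in> Bij X" using MB s(1) by blast
    have cG: "s0 \<in> carrier G" "s \<in> carrier G" using s0B sB by (auto simp: G_def BijGroup_def)
    have "s0 \<otimes>\<^bsub>G\<^esub> r = (s0 \<otimes>\<^bsub>G\<^esub> inv\<^bsub>G\<^esub> s0) \<otimes>\<^bsub>G\<^esub> s"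
      unfolding r_def using grp cG by (simp add: group.inv_closed monoid.m_assoc group.is_monoid)
    also have "\<dots> = s" using grp cG by (simp add: group.r_inv group.is_monoid monoid.l_one)
    finally have eq: "s0 \<otimes>\<^bsub>G\<^esub> r = s" .
    have ev: "s x = s0 (r x)" if "x \<in> X" for x
    proof -
      have "s0 \<otimes>\<^bsub>G\<^esub> r = compose X s0 r" using s0B rB by (simp add: G_def BijGroup_def)
      then show ?thesis using eq that by (simp add: compose_def)
    qed
    have "r a \<in> X" using rB a by (auto simp: Bij_def bij_betw_def)
    moreover have "s0 (r a) = s0 a" using ev[OF a] s(2) s0(2) by simp
    ultimately have ra: "r a = a" using inj0 a by (auto dest: inj_onD)
    have "y = s0 (r l)" using s(3) ev[OF l] by simp
    then show "y \<in> s0 ` {\<rho> l | \<rho>. \<rho> \<in> M \<and> \<rho> a = a}" using rM ra by blast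
  qed
  then show ?thesis using fin finite_subset by blast
qed

context setting
begin

lemma fin_nbrs: assumes "finite L" shows "finite {w. E b w \<and> lab w \<in> L}"
proof -
  have "inj_on lab {w. E b w \<and> lab w \<in> L}" by (auto intro: inj_onI nb_unique)
  moreover have "lab ` {w. E b w \<and> lab w \<in> L} \<subseteq> L" by auto
  ultimately show ?thesis using assms finite_imageD finite_subset by metis
qed

lemma U_la: assumes "g \<in> U_c V E VX VY X Y c M N" "E z w"
  shows "E (g z) (g w)" "g z \<in> V" "g w \<in> V"
    "lab (g w) = local_action E c g z (S z) (lab w)"
    "z \<in> VX \<Longrightarrow> local_action E c g z (S z) \<in> M"
    "z \<notin> VX \<Longrightarrow> local_action E c g z (S z) \<in> N"
proof -
  have zV: "z \<in> V" and wV: "w \<in> V" using E_V assms(2) by auto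
  have aut: "g \<in> tree_aut V E" using assms(1) by (simp add: U_c_def)
  then show e: "E (g z) (g w)" using zV wV assms(2) by (simp add: tree_aut_def)
  then show "g z \<in> V" "g w \<in> V" using E_V by auto
  have l: "lab w \<in> S z" using lab_in[OF assms(2)] .
  have "nb z (lab w) = w" using nb_lab[OF assms(2)] .
  then show "lab (g w) = local_action E c g z (S z) (lab w)" using la_val[OF zV l] e by simp
  show "z \<in> VX \<Longrightarrow> local_action E c g z (S z) \<in> M" using assms(1) by (simp add: U_c_def S_def SS_def)
  show "z \<notin> VX \<Longrightarrow> local_action E c g z (S z) \<in> N"
    using assms(1) zV V_eq by (auto simp: U_c_def S_def SS_def)
qed

end


context setting
begin

lemma pairs_fin:
  assumes sgM: "subgroup M (BijGroup X)" and sgN: "subgroup N (BijGroup Y)"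
    and sfM: "subdegree_finite M X" and ofN: "all_orbits_finite N Y"
    and om: "\<omega> \<in> VY" and tr: "E\<^sup>+\<^sup>+ \<omega> z"
  shows "\<exists>p. E p z \<and> finite {(g p, g z) | g. g \<in> U_c V E VX VY X Y c M N \<and> g \<omega> = \<omega>}"
  using tr
proof (induction rule: tranclp_induct)
  case (base z)
  have omX: "\<omega> \<notin> VX" using om disj by auto
  have SY: "S \<omega> = Y" using omX by (simp add: S_def SS_def)
  have lz: "lab z \<in> Y" using lab_in[OF base] SY by simp
  define L where "L = {\<sigma> (lab z) | \<sigma>. \<sigma> \<in> N}"
  have fL: "finite L" using ofN lz by (simp add: all_orbits_finite_def L_def)
  have "{(g \<omega>, g z) | g. g \<in> U_c V E VX VY X Y c M N \<and> g \<omega> = \<omega>} \<subseteq> {\<omega>} \<times> {w. E \<omega> w \<and> lab w \<in> L}"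
  proof
    fix q assume "q \<in> {(g \<omega>, g z) | g. g \<in> U_c V E VX VY X Y c M N \<and> g \<omega> = \<omega>}"
    then obtain g where g: "g \<in> U_c V E VX VY X Y c M N" "g \<omega> = \<omega>" "q = (g \<omega>, g z)" by blast
    have "E (g \<omega>) (g z)" using U_la(1)[OF g(1) base] .
    moreover have "lab (g z) \<in> L" using U_la(4,6)[OF g(1) base] omX unfolding L_def by blast
    ultimately show "q \<in> {\<omega>} \<times> {w. E \<omega> w \<and> lab w \<in> L}" using g(2,3) by simp
  qed
  moreover have "finite ({\<omega>} \<times> {w. E \<omega> w \<and> lab w \<in> L})" using fin_nbrs[OF fL] by simp
  ultimately show ?case using base finite_subset by blast
next
  case (step y z)
  obtain p where p: "E p y" and fp: "finite {(g p, g y) | g. g \<in> U_c V E VX VY X Y c M N \<and> g \<omega> = \<omega>}"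
    using step.IH by blast
  define P where "P = {(g p, g y) | g. g \<in> U_c V E VX VY X Y c M N \<and> g \<omega> = \<omega>}"
  define K where "K = (\<lambda>a. if y \<in> VX then {\<sigma> (lab z) | \<sigma>. \<sigma> \<in> M \<and> \<sigma> (lab p) = lab a}
                       else {\<sigma> (lab z) | \<sigma>. \<sigma> \<in> N})"
  have yV: "y \<in> V" using E_V step(2) by auto
  have fK: "finite (K a)" for a
  proof (cases "y \<in> VX")
    case True
    then have "lab z \<in> X" "lab p \<in> X" using lab_in[OF step(2)] lab_in[OF E_sym[OF p]] by (auto simp: S_def SS_def)
    then show ?thesis using coset_fin[OF sgM sfM] True by (simp add: K_def)
  next
    case False
    then have "lab z \<in> Y" using lab_in[OF step(2)] by (auto simp: S_def SS_def)
    then show ?thesis using ofN False by (simp add: K_def all_orbits_finite_def)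
  qed
  have "{(g y, g z) | g. g \<in> U_c V E VX VY X Y c M N \<and> g \<omega> = \<omega>}
      \<subseteq> (\<Union>q\<in>P. {snd q} \<times> {w. E (snd q) w \<and> lab w \<in> K (fst q)})"
  proof
    fix q assume "q \<in> {(g y, g z) | g. g \<in> U_c V E VX VY X Y c M N \<and> g \<omega> = \<omega>}"
    then obtain g where g: "g \<in> U_c V E VX VY X Y c M N" "g \<omega> = \<omega>" "q = (g y, g z)" by blast
    have qP: "(g p, g y) \<in> P" using g P_def by blast
    have py: "E y p" using E_sym[OF p] .
    have e: "E (g y) (g z)" using U_la(1)[OF g(1) step(2)] .
    have "lab (g z) \<in> K (g p)"
    proof (cases "y \<in> VX")
      case True
      then show ?thesis using U_la(4,5)[OF g(1) step(2)] U_la(4)[OF g(1) py] unfolding K_def by auto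
    next
      case False
      then show ?thesis using U_la(4,6)[OF g(1) step(2)] unfolding K_def by auto
    qed
    then show "q \<in> (\<Union>q\<in>P. {snd q} \<times> {w. E (snd q) w \<and> lab w \<in> K (fst q)})"
      using qP e g(3) by force
  qed
  moreover have "finite (\<Union>q\<in>P. {snd q} \<times> {w. E (snd q) w \<and> lab w \<in> K (fst q)})"
    using fp P_def fin_nbrs[OF fK] by auto
  ultimately show ?case using step(2) finite_subset by blast
qed

lemma orbit_fin:
  assumes sgM: "subgroup M (BijGroup X)" and sgN: "subgroup N (BijGroup Y)"
    and sfM: "subdegree_finite M X" and ofN: "all_orbits_finite N Y"
    and om: "\<omega> \<in> VY" and al: "\<alpha> \<in> VY"
  shows "finite {g \<alpha> | g. g \<in> U_c V E VX VY X Y c M N \<and> g \<omega> = \<omega>}"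
proof (cases "\<alpha> = \<omega>")
  case True
  then have "{g \<alpha> | g. g \<in> U_c V E VX VY X Y c M N \<and> g \<omega> = \<omega>} \<subseteq> {\<omega>}" by auto
  then show ?thesis using finite_subset by blast
next
  case False
  have "E\<^sup>*\<^sup>* \<omega> \<alpha>" using conn om al V_eq by auto
  then have "E\<^sup>+\<^sup>+ \<omega> \<alpha>" using False by (auto dest: rtranclpD)
  then obtain p where "finite {(g p, g \<alpha>) | g. g \<in> U_c V E VX VY X Y c M N \<and> g \<omega> = \<omega>}"
    using pairs_fin[OF sgM sgN sfM ofN om] by blast
  then have "finite (snd ` {(g p, g \<alpha>) | g. g \<in> U_c V E VX VY X Y c M N \<and> g \<omega> = \<omega>})" by simp
  moreover have "{g \<alpha> | g. g \<in> U_c V E VX VY X Y c M N \<and> g \<omega> = \<omega>}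
     \<subseteq> snd ` {(g p, g \<alpha>) | g. g \<in> U_c V E VX VY X Y c M N \<and> g \<omega> = \<omega>}" by force
  ultimately show ?thesis using finite_subset by blast
qed

end


context setting
begin

lemma ex_VX: "\<exists>u. u \<in> VX"
proof -
  obtain z where z: "z \<in> V" using tree by (auto simp: is_tree_def)
  show ?thesis
  proof (cases "z \<in> VX")
    case True then show ?thesis by blast
  next
    case False
    obtain w where "E z w" using has_nb[OF z] by blast
    then have "w \<in> VX" using cls_nb False by blast
    then show ?thesis by blast
  qed
qed

lemma ex_VY: "\<exists>u. u \<in> VY"
proof -
  obtain u where u: "u \<in> VX" using ex_VX by blast
  then have uV: "u \<in> V" using V_eq by auto
  obtain w where w: "E u w" using has_nb[OF uV] by blast
  then have "w \<notin> VX" "w \<in> V" using cls_nb u E_V by auto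
  then show ?thesis using V_eq by blast
qed

lemma box_mem: "g \<in> U_c V E VX VY X Y c M N \<Longrightarrow> restrict g VY \<in> box_product V E VX VY X Y c M N"
  by (simp add: box_product_def)

lemma ids:
  assumes sgM: "subgroup M (BijGroup X)" and sgN: "subgroup N (BijGroup Y)"
  shows "(\<lambda>x\<in>X. x) \<in> M" "(\<lambda>x\<in>Y. x) \<in> N" "M \<subseteq> Bij X" "N \<subseteq> Bij Y"
  using subgroup.one_closed[OF sgM] subgroup.one_closed[OF sgN]
    subgroup.subset[OF sgM] subgroup.subset[OF sgN] by (auto simp: BijGroup_def)

lemma M_part:
  assumes sgM: "subgroup M (BijGroup X)" and sgN: "subgroup N (BijGroup Y)"
    and sdf: "subdegree_finite (box_product V E VX VY X Y c M N) VY"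
  shows "subdegree_finite M X"
  unfolding subdegree_finite_def
proof (intro ballI)
  fix x0 x1 assume x0: "x0 \<in> X" and x1: "x1 \<in> X"
  obtain u where u: "u \<in> VX" using ex_VX by blast
  have uV: "u \<in> V" using u V_eq by auto
  have SX: "S u = X" using u by (simp add: S_def SS_def)
  define \<omega> where "\<omega> = nb u x0"
  define \<alpha> where "\<alpha> = nb u x1"
  have omY: "\<omega> \<in> VY" using nb_cls[OF uV] SX x0 u V_eq unfolding \<omega>_def by auto
  have alY: "\<alpha> \<in> VY" using nb_cls[OF uV] SX x1 u V_eq unfolding \<alpha>_def by auto
  have fin: "finite {h \<alpha> | h. h \<in> box_product V E VX VY X Y c M N \<and> h \<omega> = \<omega>}"
    using sdf omY alY by (simp add: subdegree_finite_def)
  have "{\<tau> x1 | \<tau>. \<tau> \<in> M \<and> \<tau> x0 = x0} \<subseteq> lab ` {h \<alpha> | h. h \<in> box_product V E VX VY X Y c M N \<and> h \<omega> = \<omega>}"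
  proof
    fix y assume "y \<in> {\<tau> x1 | \<tau>. \<tau> \<in> M \<and> \<tau> x0 = x0}"
    then obtain \<tau> where t: "\<tau> \<in> M" "\<tau> x0 = x0" "y = \<tau> x1" by blast
    have tB: "\<tau> \<in> Bij (S u)" using t(1) ids[OF sgM sgN] SX by auto
    have bt: "bij_betw \<tau> (S u) (S u)" using tB by (simp add: Bij_def)
    have rU: "rot u \<tau> \<in> U_c V E VX VY X Y c M N"
      using rot_U[OF uV tB ids(1,2)[OF sgM sgN]] t(1) u by blast
    have v0: "valid u None [x0]" using valid_Cons[OF uV] SX x0 by simp
    have v1: "valid u None [x1]" using valid_Cons[OF uV] SX x1 by simp
    have "rot u \<tau> \<omega> = walk u (Gp \<tau> True [x0])" using rot_walk[OF uV bt v0] \<omega>_def by simp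
    then have r0: "rot u \<tau> \<omega> = \<omega>" using t(2) \<omega>_def by simp
    have "rot u \<tau> \<alpha> = walk u (Gp \<tau> True [x1])" using rot_walk[OF uV bt v1] \<alpha>_def by simp
    then have r1: "rot u \<tau> \<alpha> = nb u (\<tau> x1)" by simp
    have "\<tau> x1 \<in> S u" using bt x1 SX bij_betw_apply by metis
    then have yy: "lab (rot u \<tau> \<alpha>) = y" using r1 nb(2)[OF uV] t(3) by simp
    have hb: "restrict (rot u \<tau>) VY \<in> box_product V E VX VY X Y c M N" using box_mem[OF rU] .
    have hw: "restrict (rot u \<tau>) VY \<omega> = \<omega>" using r0 omY by auto
    have ha: "restrict (rot u \<tau>) VY \<alpha> = rot u \<tau> \<alpha>" using alY by auto
    have m: "restrict (rot u \<tau>) VY \<alpha> \<in> {h \<alpha> | h. h \<in> box_product V E VX VY X Y c M N \<and> h \<omega> = \<omega>}"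
      using hb hw by blast
    have e: "y = lab (restrict (rot u \<tau>) VY \<alpha>)" using ha yy by simp
    show "y \<in> lab ` {h \<alpha> | h. h \<in> box_product V E VX VY X Y c M N \<and> h \<omega> = \<omega>}"
      using rev_image_eqI[where f=lab, OF m e] .
  qed
  then show "finite {\<tau> x1 | \<tau>. \<tau> \<in> M \<and> \<tau> x0 = x0}" using fin finite_subset by blast
qed

lemma cn_lab:
  assumes om: "\<omega> \<in> V" and v: "valid \<omega> None [y', x]"
  shows "lab (SOME u. E \<omega> u \<and> E u (walk \<omega> [y', x])) = y'"
proof -
  have y': "y' \<in> S \<omega>" and vx: "valid (nb \<omega> y') (Some (lab \<omega>)) [x]" using v valid_Cons[OF om] by auto
  have u0V: "nb \<omega> y' \<in> V" using nb_cls[OF om y'] by simp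
  have x: "x \<in> S (nb \<omega> y')" "x \<noteq> lab \<omega>" using vx valid_Cons[OF u0V] by auto
  define \<beta> where "\<beta> = walk \<omega> [y', x]"
  have b: "\<beta> = nb (nb \<omega> y') x" by (simp add: \<beta>_def)
  have "E \<omega> (nb \<omega> y') \<and> E (nb \<omega> y') \<beta>" using nb(1)[OF om y'] nb(1)[OF u0V x(1)] b by simp
  then have ex: "\<exists>u. E \<omega> u \<and> E u \<beta>" by blast
  define u where "u = (SOME u. E \<omega> u \<and> E u \<beta>)"
  have u: "E \<omega> u" "E u \<beta>" using someI_ex[OF ex] u_def by auto
  have uV: "u \<in> V" using E_V u(1) by auto
  have lb: "lab \<beta> = x" using b nb(2)[OF u0V x(1)] by simp
  have lu: "lab u \<in> S \<omega>" using lab_in[OF u(1)] .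
  have nu: "nb \<omega> (lab u) = u" using nb_lab[OF u(1)] .
  have xu: "x \<in> S u" using lab_in[OF u(2)] lb by simp
  have v2: "valid \<omega> None [lab u, x]" using valid_Cons[OF om] valid_Cons[OF uV] lu nu xu x(2) by simp
  have "walk \<omega> [lab u, x] = nb u x" using nu by simp
  also have "\<dots> = \<beta>" using nb_lab[OF u(2)] lb by simp
  finally have "[lab u, x] = [y', x]" using word_uniq[OF om v2 v] \<beta>_def by simp
  then show ?thesis using u_def \<beta>_def by simp
qed

lemma N_part:
  assumes sgM: "subgroup M (BijGroup X)" and sgN: "subgroup N (BijGroup Y)"
    and X2: "\<exists>a\<in>X. \<exists>b\<in>X. a \<noteq> b"
    and sdf: "subdegree_finite (box_product V E VX VY X Y c M N) VY"
  shows "all_orbits_finite N Y"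
  unfolding all_orbits_finite_def
proof (intro ballI)
  fix y assume y: "y \<in> Y"
  obtain \<omega> where om: "\<omega> \<in> VY" using ex_VY by blast
  have omV: "\<omega> \<in> V" and omX: "\<omega> \<notin> VX" using om V_eq disj by auto
  have SY: "S \<omega> = Y" using omX by (simp add: S_def SS_def)
  obtain x where x: "x \<in> X" "x \<noteq> lab \<omega>" using X2 by metis
  have yS: "y \<in> S \<omega>" using SY y by simp
  have u0V: "nb \<omega> y \<in> V" and u0X: "nb \<omega> y \<in> VX" using nb_cls[OF omV yS] omX by auto
  have Su0: "S (nb \<omega> y) = X" using u0X by (simp add: S_def SS_def)
  have v: "valid \<omega> None [y, x]" using valid_Cons[OF omV] valid_Cons[OF u0V] yS Su0 x by simp
  define \<alpha> where "\<alpha> = walk \<omega> [y, x]"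
  have alV: "\<alpha> \<in> V" and alX: "\<alpha> \<notin> VX" using walk_props[OF omV v] omX unfolding \<alpha>_def by auto
  have alY: "\<alpha> \<in> VY" using alV alX V_eq by auto
  define F where "F = (\<lambda>\<beta>. lab (SOME u. E \<omega> u \<and> E u \<beta>))"
  have fin: "finite {h \<alpha> | h. h \<in> box_product V E VX VY X Y c M N \<and> h \<omega> = \<omega>}"
    using sdf om alY by (simp add: subdegree_finite_def)
  have "{\<sigma> y | \<sigma>. \<sigma> \<in> N} \<subseteq> F ` {h \<alpha> | h. h \<in> box_product V E VX VY X Y c M N \<and> h \<omega> = \<omega>}"
  proof
    fix z assume "z \<in> {\<sigma> y | \<sigma>. \<sigma> \<in> N}"
    then obtain \<sigma> where s: "\<sigma> \<in> N" "z = \<sigma> y" by blast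
    have sB: "\<sigma> \<in> Bij (S \<omega>)" using s(1) ids[OF sgM sgN] SY by auto
    have bs: "bij_betw \<sigma> (S \<omega>) (S \<omega>)" using sB by (simp add: Bij_def)
    have rU: "rot \<omega> \<sigma> \<in> U_c V E VX VY X Y c M N"
      using rot_U[OF omV sB ids(1,2)[OF sgM sgN]] s(1) omX by blast
    have "rot \<omega> \<sigma> \<omega> = walk \<omega> (Gp \<sigma> True [])" using rot_walk[OF omV bs, of "[]"] by simp
    then have r0: "rot \<omega> \<sigma> \<omega> = \<omega>" by simp
    have r1: "rot \<omega> \<sigma> \<alpha> = walk \<omega> [\<sigma> y, x]" using rot_walk[OF omV bs v] \<alpha>_def by simp
    have v': "valid \<omega> None [\<sigma> y, x]" using valid_Gp[OF omV bs v] by simp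
    have yy: "F (rot \<omega> \<sigma> \<alpha>) = z" using cn_lab[OF omV v'] r1 s(2) F_def by simp
    have hb: "restrict (rot \<omega> \<sigma>) VY \<in> box_product V E VX VY X Y c M N" using box_mem[OF rU] .
    have hw: "restrict (rot \<omega> \<sigma>) VY \<omega> = \<omega>" using r0 om by auto
    have ha: "restrict (rot \<omega> \<sigma>) VY \<alpha> = rot \<omega> \<sigma> \<alpha>" using alY by auto
    have m: "restrict (rot \<omega> \<sigma>) VY \<alpha> \<in> {h \<alpha> | h. h \<in> box_product V E VX VY X Y c M N \<and> h \<omega> = \<omega>}"
      using hb hw by blast
    have e: "z = F (restrict (rot \<omega> \<sigma>) VY \<alpha>)" using ha yy by simp
    show "z \<in> F ` {h \<alpha> | h. h \<in> box_product V E VX VY X Y c M N \<and> h \<omega> = \<omega>}"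
      using rev_image_eqI[where f=F, OF m e] .
  qed
  then show "finite {\<sigma> y | \<sigma>. \<sigma> \<in> N}" using fin finite_subset by blast
qed

end

theorem proposition5p2:
  fixes X Y :: "'c set" and M N :: "('c \<Rightarrow> 'c) set"
    and V VX VY :: "'v set" and E :: "'v \<Rightarrow> 'v \<Rightarrow> bool" and c :: "'v \<times> 'v \<Rightarrow> 'c"
  assumes "X \<inter> Y = {}"
    and "\<exists>a\<in>X. \<exists>b\<in>X. a \<noteq> b" and "\<exists>a\<in>Y. \<exists>b\<in>Y. a \<noteq> b"
    and "subgroup M (BijGroup X)" and "M \<noteq> {\<one>\<^bsub>BijGroup X\<^esub>}"
    and "subgroup N (BijGroup Y)" and "N \<noteq> {\<one>\<^bsub>BijGroup Y\<^esub>}"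
    and "biregular_tree V E VX VY X Y"
    and "legal_colouring E VX VY X Y c"
  shows "subdegree_finite (box_product V E VX VY X Y c M N) VY
     \<longleftrightarrow> subdegree_finite M X \<and> all_orbits_finite N Y"
proof -
  interpret setting X Y V VX VY E c
    using assms(2,3,8,9) by unfold_locales auto
  show ?thesis
  proof
    assume sdf: "subdegree_finite (box_product V E VX VY X Y c M N) VY"
    show "subdegree_finite M X \<and> all_orbits_finite N Y"
      using M_part[OF assms(4,6) sdf] N_part[OF assms(4,6) assms(2) sdf] by simp
  next
    assume h: "subdegree_finite M X \<and> all_orbits_finite N Y"
    show "subdegree_finite (box_product V E VX VY X Y c M N) VY" unfolding subdegree_finite_def
    proof (intro ballI)
      fix \<omega> \<alpha> assume om: "\<omega> \<in> VY" and al: "\<alpha> \<in> VY"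
      have "{h \<alpha> | h. h \<in> box_product V E VX VY X Y c M N \<and> h \<omega> = \<omega>}
          \<subseteq> {g \<alpha> | g. g \<in> U_c V E VX VY X Y c M N \<and> g \<omega> = \<omega>}"
      proof
        fix y assume "y \<in> {h \<alpha> | h. h \<in> box_product V E VX VY X Y c M N \<and> h \<omega> = \<omega>}"
        then obtain h where hb: "h \<in> box_product V E VX VY X Y c M N" "h \<omega> = \<omega>" "y = h \<alpha>" by blast
        then obtain g where g: "g \<in> U_c V E VX VY X Y c M N" "h = restrict g VY"
          by (auto simp: box_product_def)
        have "g \<omega> = \<omega>" "y = g \<alpha>" using hb g om al by auto
        then show "y \<in> {g \<alpha> | g. g \<in> U_c V E VX VY X Y c M N \<and> g \<omega> = \<omega>}" using g(1) by blast
      qed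
      moreover have "finite {g \<alpha> | g. g \<in> U_c V E VX VY X Y c M N \<and> g \<omega> = \<omega>}"
        using orbit_fin[OF assms(4,6) _ _ om al] h by blast
      ultimately show "finite {h \<alpha> | h. h \<in> box_product V E VX VY X Y c M N \<and> h \<omega> = \<omega>}"
        using finite_subset by blast
    qed
  qed
qed

end
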